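(* Let $X$ be a compact metric space and $F_1,F_2$ two $k$-iterated contraction systems on $X$ (possibly with different attractors), $F_2$ having contraction ratio $\theta\in(0,1)$. Let $A_1,A_2:X\to\mathbb{R}$ be potentials normalized with respect to $F_1$ and $F_2$ respectively, with $A_2$ Lipschitz, and let $\mu_i$ be the Gibbs measure of $(F_i,A_i)$, i.e. the unique Borel probability measure on $X$ with $\mathscr{L}_i^*\mu_i=\mu_i$. Let $C>0$, $\lambda\in(0,1)$ be constants, depending only on $\operatorname{diam}X$, $\theta$ and $\operatorname{Lip}(A_2)$, such that $W_1((\mathscr{L}_2^* )^n\mu,(\mathscr{L}_2^* )^n\nu)\le C\lambda^nW_1(\mu,\nu)$ for all $n$ and all Borel probability measures $\mu,\nu$ on $X$. Then \[W_1(\mu_1,\mu_2)\le\frac{C}{1-\lambda}\Big(\operatorname{diam}X\cdot\|A_1-A_2\|_\infty+(\operatorname{Lip}(A_2)\operatorname{diam}X+1)\,d_\infty(F_1,F_2)\Big).\]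
   Context: A $k$-multiset is an unordered list of $k$ elements with repetitions allowed; sums over it count multiplicities. A $k$-iterated contraction system (ICS) on $X$ with contraction ratio $\theta$ assigns to each $x\in X$ a $k$-multiset $F(x)$ of points of $X$ such that for all $x,y$ there are enumerations $F(x)=\{x_1,\dots,x_k\}$, $F(y)=\{y_1,\dots,y_k\}$ with $d(x_i,y_i)\le\theta d(x,y)$. $A_i$ normalized w.r.t. $F_i$ means $\sum_{y\in F_i(x)}e^{A_i(y)}=1$ for all $x$. $\mathscr{L}_if(x)=\sum_{y\in F_i(x)}e^{A_i(y)}f(y)$ and $\mathscr{L}_i^*$ is its dual on measures. $d_\infty(F_1,F_2)=\sup_{x\in X}\inf\sup_jd(y_1^j,y_2^j)$, the infimum over all bijections (enumerations) $F_1(x)=\{y_1^j\}_{j\le k}$, $F_2(x)=\{y_2^j\}_{j\le k}$. $W_1$ is the 1-Wasserstein distance. *)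

theory Defs
  imports "HOL-Probability.Probability" "HOL-Library.Multiset"
begin

definition prob_on :: "'a::metric_space set \<Rightarrow> 'a measure \<Rightarrow> bool" where
  "prob_on X M \<longleftrightarrow> prob_space M \<and> sets M = sets (restrict_space borel X)"

definition is_ICS :: "'a::metric_space set \<Rightarrow> nat \<Rightarrow> real \<Rightarrow> ('a \<Rightarrow> 'a multiset) \<Rightarrow> bool" where
  "is_ICS X k \<theta> F \<longleftrightarrow>
     (\<forall>x\<in>X. size (F x) = k \<and> set_mset (F x) \<subseteq> X) \<and>
     (\<forall>x\<in>X. \<forall>y\<in>X. \<exists>xs ys. mset xs = F x \<and> mset ys = F y \<and>
         (\<forall>i<k. dist (xs ! i) (ys ! i) \<le> \<theta> * dist x y))"

definition normalized :: "'a set \<Rightarrow> ('a \<Rightarrow> 'a multiset) \<Rightarrow> ('a \<Rightarrow> real) \<Rightarrow> bool" where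
  "normalized X F A \<longleftrightarrow> (\<forall>x\<in>X. (\<Sum>y\<in>#F x. exp (A y)) = 1)"

definition dual_transfer :: "'a::metric_space set \<Rightarrow> ('a \<Rightarrow> 'a multiset) \<Rightarrow> ('a \<Rightarrow> real)
    \<Rightarrow> 'a measure \<Rightarrow> 'a measure" where
  "dual_transfer X F A \<mu> = measure_of X (sets (restrict_space borel X))
     (\<lambda>B. \<integral>\<^sup>+ x. (\<Sum>y\<in>#F x. ennreal (exp (A y)) * indicator B y) \<partial>\<mu>)"

text \<open>1-Wasserstein distance (Kantorovich-Rubinstein dual form).\<close>
definition W1 :: "'a::metric_space set \<Rightarrow> 'a measure \<Rightarrow> 'a measure \<Rightarrow> real" where
  "W1 X \<mu> \<nu> = (SUP f \<in> {f. 1-lipschitz_on X f}. (\<integral>x. f x \<partial>\<mu>) - (\<integral>x. f x \<partial>\<nu>))"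

definition Lip :: "'a::metric_space set \<Rightarrow> ('a \<Rightarrow> real) \<Rightarrow> real" where
  "Lip X A = Inf {L. L-lipschitz_on X A}"

definition d_infty :: "'a::metric_space set \<Rightarrow> ('a \<Rightarrow> 'a multiset) \<Rightarrow> ('a \<Rightarrow> 'a multiset) \<Rightarrow> real" where
  "d_infty X F1 F2 = (SUP x\<in>X. Inf {(MAX j\<in>{..<length xs}. dist (xs ! j) (ys ! j)) | xs ys.
        mset xs = F1 x \<and> mset ys = F2 x})"

end

theory Submission imports Defs begin

lemma nn_integral_superadd:
  "integral\<^sup>N M u + integral\<^sup>N M v \<le> (\<integral>\<^sup>+x. u x + v x \<partial>M)"
proof -
  let ?S = "\<lambda>u. {g. simple_function M g \<and> g \<le> u}"
  have ne: "?S w \<noteq> {}" for w :: "_ \<Rightarrow> ennreal"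
  proof -
    have "(\<lambda>_. 0) \<in> ?S w" by (auto simp: le_fun_def)
    then show ?thesis by blast
  qed
  have "(SUP s\<in>?S u. integral\<^sup>S M s) + (SUP t\<in>?S v. integral\<^sup>S M t) \<le> (\<integral>\<^sup>+x. u x + v x \<partial>M)"
  proof (subst ennreal_SUP_add_left[symmetric, OF ne], rule SUP_least)
    fix s assume s: "s \<in> ?S u"
    show "integral\<^sup>S M s + (SUP t\<in>?S v. integral\<^sup>S M t) \<le> (\<integral>\<^sup>+x. u x + v x \<partial>M)"
    proof (subst ennreal_SUP_add_right[OF ne], rule SUP_least)
      fix t assume t: "t \<in> ?S v"
      have "integral\<^sup>S M s + integral\<^sup>S M t = (\<integral>\<^sup>Sx. s x + t x \<partial>M)"
        using s t by (subst simple_integral_add) auto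
      also have "\<dots> = integral\<^sup>N M (\<lambda>x. s x + t x)"
        using s t by (intro nn_integral_eq_simple_integral[symmetric]) auto
      also have "\<dots> \<le> (\<integral>\<^sup>+x. u x + v x \<partial>M)"
        using s t by (intro nn_integral_mono) (auto simp: le_fun_def intro: add_mono)
      finally show "integral\<^sup>S M s + integral\<^sup>S M t \<le> (\<integral>\<^sup>+x. u x + v x \<partial>M)" .
    qed
  qed
  then show ?thesis unfolding nn_integral_def .
qed

lemma nn_integral_cmult_le:
  "c * integral\<^sup>N M u \<le> (\<integral>\<^sup>+x. c * u x \<partial>M)"
proof -
  let ?S = "{g. simple_function M g \<and> g \<le> u}"
  have "c * (SUP s\<in>?S. integral\<^sup>S M s) \<le> (\<integral>\<^sup>+x. c * u x \<partial>M)"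
  proof (subst SUP_mult_left_ennreal, rule SUP_least)
    fix s assume s: "s \<in> ?S"
    have "c * integral\<^sup>S M s = (\<integral>\<^sup>Sx. c * s x \<partial>M)"
      using s by simp
    also have "\<dots> = integral\<^sup>N M (\<lambda>x. c * s x)"
      using s by (intro nn_integral_eq_simple_integral[symmetric]) auto
    also have "\<dots> \<le> (\<integral>\<^sup>+x. c * u x \<partial>M)"
      using s by (intro nn_integral_mono) (auto simp: le_fun_def intro: mult_left_mono)
    finally show "c * integral\<^sup>S M s \<le> (\<integral>\<^sup>+x. c * u x \<partial>M)" .
  qed
  then show ?thesis unfolding nn_integral_def .
qed

lemma sum_mset_list:
  assumes "mset xs = M"
  shows "(\<Sum>y\<in>#M. f y) = (\<Sum>j<length xs. f (xs ! j))"
proof -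
  have "(\<Sum>y\<in>#M. f y) = sum_list (map f xs)"
    using assms[symmetric] by (metis mset_map sum_mset_sum_list)
  also have "\<dots> = (\<Sum>j<length xs. f (xs ! j))"
    by (simp add: sum_list_sum_nth atLeast0LessThan)
  finally show ?thesis .
qed

lemma ICS_facts:
  assumes "is_ICS X k \<theta> F" "x \<in> X"
  shows "size (F x) = k" "set_mset (F x) \<subseteq> X"
  using assms unfolding is_ICS_def by auto

lemma ICS_lists:
  assumes "is_ICS X k \<theta> F" "x \<in> X" "x' \<in> X"
  obtains xs ys where "mset xs = F x" "mset ys = F x'" "length xs = k" "length ys = k"
    "\<And>i. i < k \<Longrightarrow> dist (xs ! i) (ys ! i) \<le> \<theta> * dist x x'"
    "set xs \<subseteq> X" "set ys \<subseteq> X"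
proof -
  from assms obtain xs ys where h: "mset xs = F x" "mset ys = F x'"
    "\<forall>i<k. dist (xs ! i) (ys ! i) \<le> \<theta> * dist x x'"
    unfolding is_ICS_def by blast
  have "length xs = k" "length ys = k"
    using h(1,2) ICS_facts[OF assms(1,2)] ICS_facts[OF assms(1,3)] by (metis size_mset)+
  moreover have "set xs \<subseteq> X" "set ys \<subseteq> X"
    using h(1,2) ICS_facts[OF assms(1,2)] ICS_facts[OF assms(1,3)] by (metis set_mset_mset)+
  ultimately show ?thesis using h that by blast
qed

lemma ICS_cont:
  fixes \<psi> :: "'a::metric_space \<Rightarrow> real"
  assumes ics: "is_ICS X k \<theta> F" and th: "0 \<le> \<theta>" and cX: "compact X"
    and cont: "continuous_on X \<psi>"
  shows "continuous_on X (\<lambda>x. \<Sum>y\<in>#F x. \<psi> y)"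
proof (cases "k = 0")
  case True
  then have "\<And>x. x \<in> X \<Longrightarrow> F x = {#}" using ICS_facts[OF ics] by auto
  then have "continuous_on X (\<lambda>x. \<Sum>y\<in>#F x. \<psi> y) = continuous_on X (\<lambda>x. 0::real)"
    by (intro continuous_on_cong) auto
  then show ?thesis by simp
next
  case False
  then have kpos: "0 < real k" by simp
  have uc: "uniformly_continuous_on X \<psi>"
    using cont cX by (rule compact_uniformly_continuous)
  show ?thesis
    unfolding continuous_on_iff
  proof (intro ballI allI impI)
    fix x e assume x: "x \<in> X" and e: "(0::real) < e"
    from uc e kpos obtain \<delta> where \<delta>: "\<delta> > 0"
      "\<And>a b. a \<in> X \<Longrightarrow> b \<in> X \<Longrightarrow> dist a b < \<delta> \<Longrightarrow> dist (\<psi> a) (\<psi> b) < e / k"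
      unfolding uniformly_continuous_on_def by (metis divide_pos_pos)
    define d where "d = \<delta> / (\<theta> + 1)"
    have d: "d > 0" using \<delta> th by (simp add: d_def)
    have td: "\<theta> * d < \<delta>"
    proof -
      have "\<theta> * d = \<delta> * (\<theta> / (\<theta> + 1))" using th by (simp add: d_def field_simps)
      also have "\<dots> < \<delta> * 1" using \<delta> th by (intro mult_strict_left_mono) auto
      finally show ?thesis by simp
    qed
    show "\<exists>d>0. \<forall>x'\<in>X. dist x' x < d \<longrightarrow> dist (\<Sum>y\<in>#F x'. \<psi> y) (\<Sum>y\<in>#F x. \<psi> y) < e"
    proof (intro exI[of _ d] conjI ballI impI d)
      fix x' assume x': "x' \<in> X" and dx: "dist x' x < d"
      obtain xs ys where L: "mset xs = F x'" "mset ys = F x" "length xs = k" "length ys = k"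
        "\<And>i. i < k \<Longrightarrow> dist (xs ! i) (ys ! i) \<le> \<theta> * dist x' x" "set xs \<subseteq> X" "set ys \<subseteq> X"
        using ICS_lists[OF ics x' x] by blast
      have "dist (\<Sum>y\<in>#F x'. \<psi> y) (\<Sum>y\<in>#F x. \<psi> y)
          = \<bar>(\<Sum>j<k. \<psi> (xs ! j) - \<psi> (ys ! j))\<bar>"
        using sum_mset_list[OF L(1), of \<psi>] sum_mset_list[OF L(2), of \<psi>] L(3,4)
        by (simp add: dist_real_def sum_subtractf)
      also have "\<dots> \<le> (\<Sum>j<k. \<bar>\<psi> (xs ! j) - \<psi> (ys ! j)\<bar>)"
        by (rule sum_abs)
      also have "\<dots> < (\<Sum>j<k. e / k)"
      proof (rule sum_strict_mono)
        fix j assume j: "j \<in> {..<k}"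
        have a: "xs ! j \<in> X" "ys ! j \<in> X" using L j by (auto intro!: subsetD[OF _ nth_mem])
        have "dist (xs ! j) (ys ! j) \<le> \<theta> * dist x' x" using L(5) j by auto
        also have "\<dots> \<le> \<theta> * d" using dx th by (intro mult_left_mono) auto
        also have "\<dots> < \<delta>" by (rule td)
        finally show "\<bar>\<psi> (xs ! j) - \<psi> (ys ! j)\<bar> < e / k"
          using \<delta>(2)[OF a] by (simp add: dist_real_def)
      qed (use False in auto)
      also have "\<dots> = e" using kpos by simp
      finally show "dist (\<Sum>y\<in>#F x'. \<psi> y) (\<Sum>y\<in>#F x. \<psi> y) < e" .
    qed
  qed
qed

lemma tendsto_sum_mset:
  fixes \<phi> :: "nat \<Rightarrow> 'a \<Rightarrow> real"
  assumes "\<And>y. y \<in># M \<Longrightarrow> (\<lambda>n. \<phi> n y) \<longlonglongrightarrow> l y"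
  shows "(\<lambda>n. \<Sum>y\<in>#M. \<phi> n y) \<longlonglongrightarrow> (\<Sum>y\<in>#M. l y)"
  using assms
proof (induction M)
  case empty
  then show ?case by simp
next
  case (add a M)
  then show ?case by (auto intro!: tendsto_add)
qed

lemma my_sum_mset_nonneg:
  fixes f :: "'a \<Rightarrow> real"
  shows "(\<And>y. y \<in># M \<Longrightarrow> 0 \<le> f y) \<Longrightarrow> 0 \<le> (\<Sum>y\<in>#M. f y)"
  by (induction M) auto

lemma my_sum_mset_cong:
  "(\<And>y. y \<in># M \<Longrightarrow> f y = g y) \<Longrightarrow> (\<Sum>y\<in>#M. f y) = (\<Sum>y\<in>#M. g y)"
  by (induction M) auto

lemma sum_mset_ennreal:
  "(\<And>y. y \<in># M \<Longrightarrow> 0 \<le> f y) \<Longrightarrow> (\<Sum>y\<in>#M. ennreal (f y)) = ennreal (\<Sum>y\<in>#M. f y)"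
proof (induction M)
  case empty
  then show ?case by simp
next
  case (add a M)
  then show ?case by (simp add: ennreal_plus my_sum_mset_nonneg)
qed

lemma sets_S_gen:
  assumes "X \<in> sets borel"
  shows "sets (restrict_space borel X) = sigma_sets X ((\<inter>) X ` {U. open U})"
proof -
  have "sets (restrict_space borel X) = (\<inter>) X ` sigma_sets UNIV {U. open U}"
    by (simp add: sets_restrict_space sets_borel)
  also have "\<dots> = sigma_sets X ((\<inter>) X ` {U. open U})"
    using assms by (intro sigma_sets_Int) (auto simp: sets_borel)
  finally show ?thesis .
qed

lemma hU_measurable:
  fixes A :: "'a::metric_space \<Rightarrow> real"
  assumes ics: "is_ICS X k \<theta> F" and th: "0 \<le> \<theta>" and cX: "compact X"
    and cA: "continuous_on X A" and U: "open U"
  shows "(\<lambda>x. \<Sum>y\<in>#F x. exp (A y) * indicator U y) \<in> borel_measurable (restrict_space borel X)"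
proof (cases "U = UNIV")
  case True
  have "continuous_on X (\<lambda>x. \<Sum>y\<in>#F x. exp (A y) * indicator U y)"
    using True by (intro ICS_cont[OF ics th cX]) (auto intro!: continuous_intros cA)
  then show ?thesis by (rule borel_measurable_continuous_on_restrict)
next
  case False
  define \<phi> where "\<phi> n y = min 1 (real n * infdist y (-U))" for n :: nat and y
  have lim: "(\<lambda>n. \<phi> n y) \<longlonglongrightarrow> indicator U y" for y
  proof (cases "y \<in> U")
    case True
    have c: "infdist y (-U) > 0"
      using True False U by (intro infdist_pos_not_in_closed) auto
    obtain N :: nat where N: "1 / infdist y (-U) < N" using reals_Archimedean2 by blast
    have "eventually (\<lambda>n. \<phi> n y = 1) sequentially"
      unfolding eventually_sequentially
    proof (intro exI[of _ N] allI impI)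
      fix n assume "N \<le> n"
      then have "1 / infdist y (-U) < real n" using N by linarith
      then have "1 < real n * infdist y (-U)" using c by (simp add: field_simps)
      then show "\<phi> n y = 1" by (simp add: \<phi>_def)
    qed
    then show ?thesis using True by (simp add: tendsto_eventually)
  next
    case False
    then show ?thesis by (simp add: \<phi>_def)
  qed
  have cont: "continuous_on X (\<lambda>x. \<Sum>y\<in>#F x. exp (A y) * \<phi> n y)" for n
    unfolding \<phi>_def
    by (intro ICS_cont[OF ics th cX]) (auto intro!: continuous_intros cA)
  show ?thesis
  proof (rule borel_measurable_LIMSEQ_real)
    fix x
    show "(\<lambda>n. \<Sum>y\<in>#F x. exp (A y) * \<phi> n y) \<longlonglongrightarrow> (\<Sum>y\<in>#F x. exp (A y) * indicator U y)"
      by (intro tendsto_sum_mset tendsto_mult_left lim)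
  next
    fix n
    show "(\<lambda>x. \<Sum>y\<in>#F x. exp (A y) * \<phi> n y) \<in> borel_measurable (restrict_space borel X)"
      by (rule borel_measurable_continuous_on_restrict[OF cont])
  qed
qed

definition lst :: "('a \<Rightarrow> 'a multiset) \<Rightarrow> 'a \<Rightarrow> 'a list" where
  "lst F x = (SOME xs. mset xs = F x)"

lemma mset_lst: "mset (lst F x) = F x"
  unfolding lst_def by (rule someI_ex) (rule ex_mset)

definition kern :: "'a::metric_space set \<Rightarrow> ('a \<Rightarrow> 'a multiset) \<Rightarrow> ('a \<Rightarrow> real) \<Rightarrow> 'a \<Rightarrow> 'a measure" where
  "kern X F A x = distr (point_measure {..<length (lst F x)} (\<lambda>j. ennreal (exp (A (lst F x ! j)))))
      (restrict_space borel X) (\<lambda>j. lst F x ! j)"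

lemma X_borel: "compact (X::'a::metric_space set) \<Longrightarrow> X \<in> sets borel"
  by (intro borel_closed compact_imp_closed)

lemma kern_sets: "sets (kern X F A x) = sets (restrict_space borel X)"
  by (simp add: kern_def)

lemma kern_nn_integral:
  assumes ics: "is_ICS X k \<theta> F" and x: "x \<in> X"
    and f: "f \<in> borel_measurable (restrict_space borel X)"
  shows "integral\<^sup>N (kern X F A x) f = (\<Sum>y\<in>#F x. ennreal (exp (A y)) * f y)"
proof -
  define l where "l = lst F x"
  define P where "P = point_measure {..<length l} (\<lambda>j. ennreal (exp (A (l ! j))))"
  have sub: "set l \<subseteq> X"
    using ICS_facts(2)[OF ics x] mset_lst[of F x] unfolding l_def by (metis set_mset_mset)
  have "\<forall>j\<in>{..<length l}. l ! j \<in> X"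
    using sub nth_mem by blast
  then have T: "(\<lambda>j. l ! j) \<in> measurable P (restrict_space borel X)"
    unfolding P_def measurable_point_measure_eq1 space_restrict_space by auto
  have sd: "sets (distr P (restrict_space borel X) (\<lambda>j. l ! j)) = sets (restrict_space borel X)"
    by (rule sets_distr)
  have f': "f \<in> borel_measurable (distr P (restrict_space borel X) (\<lambda>j. l ! j))"
    using f measurable_cong_sets[OF sd refl] by blast
  have "integral\<^sup>N (kern X F A x) f = integral\<^sup>N (distr P (restrict_space borel X) (\<lambda>j. l ! j)) f"
    unfolding kern_def P_def l_def ..
  also have "\<dots> = integral\<^sup>N P (\<lambda>j. f (l ! j))"
    by (rule nn_integral_distr[OF T f'])
  also have "\<dots> = (\<Sum>j<length l. ennreal (exp (A (l ! j))) * f (l ! j))"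
    unfolding P_def by (rule nn_integral_point_measure_finite) simp
  also have "\<dots> = (\<Sum>y\<in>#F x. ennreal (exp (A y)) * f y)"
    unfolding l_def by (rule sum_mset_list[symmetric]) (rule mset_lst)
  finally show ?thesis .
qed

lemma kern_emeasure:
  assumes ics: "is_ICS X k \<theta> F" and x: "x \<in> X"
    and B: "B \<in> sets (restrict_space borel X)"
  shows "emeasure (kern X F A x) B = (\<Sum>y\<in>#F x. ennreal (exp (A y)) * indicator B y)"
proof -
  have "emeasure (kern X F A x) B = integral\<^sup>N (kern X F A x) (indicator B)"
    using B by (simp add: kern_sets)
  also have "\<dots> = (\<Sum>y\<in>#F x. ennreal (exp (A y)) * indicator B y)"
    using B by (intro kern_nn_integral[OF ics x]) simp
  finally show ?thesis .
qed

lemma space_S: "compact (X::'a::metric_space set) \<Longrightarrow> space (restrict_space borel X) = X"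
  by (simp add: space_restrict_space)

lemma kern_prob:
  assumes ics: "is_ICS X k \<theta> F" and x: "x \<in> X" and cX: "compact X"
    and nA: "normalized X F A"
  shows "prob_space (kern X F A x)"
proof
  have sp: "space (kern X F A x) = X"
    by (rule trans[OF sets_eq_imp_space_eq[OF kern_sets] space_S[OF cX]])
  have XS: "X \<in> sets (restrict_space borel X)"
    using space_S[OF cX] by (metis sets.top)
  have "emeasure (kern X F A x) X = (\<Sum>y\<in>#F x. ennreal (exp (A y)) * indicator X y)"
    by (rule kern_emeasure[OF ics x XS])
  also have "\<dots> = (\<Sum>y\<in>#F x. ennreal (exp (A y)))"
    using ICS_facts(2)[OF ics x] by (intro my_sum_mset_cong) (auto simp: indicator_def)
  also have "\<dots> = ennreal (\<Sum>y\<in>#F x. exp (A y))"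
    by (rule sum_mset_ennreal) simp
  also have "\<dots> = 1" using nA x by (simp add: normalized_def)
  finally show "emeasure (kern X F A x) (space (kern X F A x)) = 1" using sp by simp
qed

lemma kern_measurable:
  assumes ics: "is_ICS X k \<theta> F" and th: "0 \<le> \<theta>" and cX: "compact X"
    and cA: "continuous_on X A" and nA: "normalized X F A"
  shows "kern X F A \<in> measurable (restrict_space borel X) (subprob_algebra (restrict_space borel X))"
proof (rule measurable_subprob_algebra_generated[OF sets_S_gen[OF X_borel[OF cX]]])
  show "Int_stable ((\<inter>) X ` {U. open U})"
  proof (unfold Int_stable_def, safe)
    fix U V :: "'a set" assume "open U" "open V"
    then show "X \<inter> U \<inter> (X \<inter> V) \<in> (\<inter>) X ` {U. open U}"
      by (intro image_eqI[of _ _ "U \<inter> V"]) auto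
  qed
  show "(\<inter>) X ` {U. open U} \<subseteq> Pow X" by auto
next
  fix a assume "a \<in> space (restrict_space borel X)"
  then have a: "a \<in> X" using space_S[OF cX] by simp
  show "subprob_space (kern X F A a)"
    by (rule prob_space_imp_subprob_space[OF kern_prob[OF ics a cX nA]])
  show "sets (kern X F A a) = sets (restrict_space borel X)" by (rule kern_sets)
next
  fix B assume "B \<in> (\<inter>) X ` {U. open U}"
  then obtain U where U: "open U" and B: "B = X \<inter> U" by auto
  have BS: "B \<in> sets (restrict_space borel X)"
    using U B by (auto simp: sets_restrict_space)
  have eq: "emeasure (kern X F A a) B = ennreal (\<Sum>y\<in>#F a. exp (A y) * indicator U y)"
    if a: "a \<in> space (restrict_space borel X)" for a
  proof -
    have a': "a \<in> X" using a space_S[OF cX] by simp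
    have "emeasure (kern X F A a) B = (\<Sum>y\<in>#F a. ennreal (exp (A y)) * indicator B y)"
      by (rule kern_emeasure[OF ics a' BS])
    also have "\<dots> = (\<Sum>y\<in>#F a. ennreal (exp (A y) * indicator U y))"
      using ICS_facts(2)[OF ics a'] B by (intro my_sum_mset_cong) (auto simp: indicator_def)
    also have "\<dots> = ennreal (\<Sum>y\<in>#F a. exp (A y) * indicator U y)"
      by (rule sum_mset_ennreal) simp
    finally show ?thesis .
  qed
  have m: "(\<lambda>x. \<Sum>y\<in>#F x. exp (A y) * indicator U y) \<in> borel_measurable (restrict_space borel X)"
    by (rule hU_measurable[OF ics th cX cA U])
  show "(\<lambda>a. emeasure (kern X F A a) B) \<in> borel_measurable (restrict_space borel X)"
  proof -
    have "(\<lambda>a. ennreal (\<Sum>y\<in>#F a. exp (A y) * indicator U y)) \<in> borel_measurable (restrict_space borel X)"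
      using measurable_compose[OF m measurable_ennreal] by (simp add: comp_def)
    then show ?thesis
      using measurable_cong[of "restrict_space borel X" "\<lambda>a. emeasure (kern X F A a) B"
          "\<lambda>a. ennreal (\<Sum>y\<in>#F a. exp (A y) * indicator U y)"] eq by blast
  qed
next
  have XS: "X \<in> sets (restrict_space borel X)"
    using space_S[OF cX] by (metis sets.top)
  have "emeasure (kern X F A a) X = 1" if "a \<in> space (restrict_space borel X)" for a
  proof -
    have a: "a \<in> X" using that space_S[OF cX] by simp
    have sp: "space (kern X F A a) = X"
      by (rule trans[OF sets_eq_imp_space_eq[OF kern_sets] space_S[OF cX]])
    show ?thesis using prob_space.emeasure_space_1[OF kern_prob[OF ics a cX nA]] sp by simp
  qed
  then show "(\<lambda>a. emeasure (kern X F A a) X) \<in> borel_measurable (restrict_space borel X)"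
    using measurable_cong[of "restrict_space borel X" "\<lambda>a. emeasure (kern X F A a) X" "\<lambda>_. 1"] by simp
qed

lemma dt_facts:
  assumes ics: "is_ICS X k \<theta> F" and th: "0 \<le> \<theta>" and cX: "compact X" and ne: "X \<noteq> {}"
    and cA: "continuous_on X A" and nA: "normalized X F A" and nu: "prob_on X \<nu>"
  shows "dual_transfer X F A \<nu> = \<nu> \<bind> kern X F A"
    and "prob_on X (dual_transfer X F A \<nu>)"
    and "\<And>f. f \<in> borel_measurable (restrict_space borel X) \<Longrightarrow>
           integral\<^sup>N (dual_transfer X F A \<nu>) f = (\<integral>\<^sup>+x. (\<Sum>y\<in>#F x. ennreal (exp (A y)) * f y) \<partial>\<nu>)"
proof -
  let ?S = "restrict_space borel X"
  let ?K = "kern X F A"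
  have sn: "sets \<nu> = sets ?S" and pn: "prob_space \<nu>" using nu by (auto simp: prob_on_def)
  have spn: "space \<nu> = X" using sets_eq_imp_space_eq[OF sn] space_S[OF cX] by simp
  have Km: "?K \<in> measurable \<nu> (subprob_algebra ?S)"
    using kern_measurable[OF ics th cX cA nA] measurable_cong_sets[OF sn refl] by blast
  have sb: "sets (\<nu> \<bind> ?K) = sets ?S"
    using spn ne by (intro sets_bind kern_sets) auto
  have spb: "space (\<nu> \<bind> ?K) = X" using sets_eq_imp_space_eq[OF sb] space_S[OF cX] by simp
  have em: "emeasure (\<nu> \<bind> ?K) B = (\<integral>\<^sup>+ x. (\<Sum>y\<in>#F x. ennreal (exp (A y)) * indicator B y) \<partial>\<nu>)"
    if B: "B \<in> sets ?S" for B
  proof -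
    have "emeasure (\<nu> \<bind> ?K) B = (\<integral>\<^sup>+ x. emeasure (?K x) B \<partial>\<nu>)"
      using spn ne Km B by (intro emeasure_bind) auto
    also have "\<dots> = (\<integral>\<^sup>+ x. (\<Sum>y\<in>#F x. ennreal (exp (A y)) * indicator B y) \<partial>\<nu>)"
      using spn by (intro nn_integral_cong kern_emeasure[OF ics _ B]) auto
    finally show ?thesis .
  qed
  have "\<nu> \<bind> ?K = measure_of X (sets ?S) (emeasure (\<nu> \<bind> ?K))"
    using measure_of_of_measure[of "\<nu> \<bind> ?K"] spb sb by simp
  also have "\<dots> = measure_of X (sets ?S) (\<lambda>B. \<integral>\<^sup>+ x. (\<Sum>y\<in>#F x. ennreal (exp (A y)) * indicator B y) \<partial>\<nu>)"
  proof (rule measure_of_eq)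
    show "sets ?S \<subseteq> Pow X" using sets.space_closed[of ?S] space_S[OF cX] by simp
    fix a assume "a \<in> sigma_sets X (sets ?S)"
    then have "a \<in> sets ?S" using sets.sigma_sets_eq[of ?S] space_S[OF cX] by simp
    then show "emeasure (\<nu> \<bind> ?K) a = (\<integral>\<^sup>+ x. (\<Sum>y\<in>#F x. ennreal (exp (A y)) * indicator a y) \<partial>\<nu>)"
      by (rule em)
  qed
  finally show eq: "dual_transfer X F A \<nu> = \<nu> \<bind> ?K"
    unfolding dual_transfer_def by simp
  have "prob_space (\<nu> \<bind> ?K)"
  proof
    have XS: "X \<in> sets ?S" using space_S[OF cX] by (metis sets.top)
    have "emeasure (\<nu> \<bind> ?K) X = (\<integral>\<^sup>+ x. emeasure (?K x) X \<partial>\<nu>)"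
      using spn ne Km XS by (intro emeasure_bind) auto
    also have "\<dots> = (\<integral>\<^sup>+ x. 1 \<partial>\<nu>)"
    proof (rule nn_integral_cong)
      fix x assume "x \<in> space \<nu>"
      then have x: "x \<in> X" using spn by simp
      have sp: "space (?K x) = X"
        by (rule trans[OF sets_eq_imp_space_eq[OF kern_sets] space_S[OF cX]])
      show "emeasure (?K x) X = 1"
        using prob_space.emeasure_space_1[OF kern_prob[OF ics x cX nA]] sp by simp
    qed
    also have "\<dots> = 1" using prob_space.emeasure_space_1[OF pn] by simp
    finally show "emeasure (\<nu> \<bind> ?K) (space (\<nu> \<bind> ?K)) = 1" using spb by simp
  qed
  then show "prob_on X (dual_transfer X F A \<nu>)"
    using eq sb by (simp add: prob_on_def)
  fix f :: "'a \<Rightarrow> ennreal" assume f: "f \<in> borel_measurable ?S"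
  have "integral\<^sup>N (\<nu> \<bind> ?K) f = (\<integral>\<^sup>+ x. integral\<^sup>N (?K x) f \<partial>\<nu>)"
    by (rule nn_integral_bind[OF f Km])
  also have "\<dots> = (\<integral>\<^sup>+x. (\<Sum>y\<in>#F x. ennreal (exp (A y)) * f y) \<partial>\<nu>)"
    using spn by (intro nn_integral_cong kern_nn_integral[OF ics _ f]) auto
  finally show "integral\<^sup>N (dual_transfer X F A \<nu>) f = (\<integral>\<^sup>+x. (\<Sum>y\<in>#F x. ennreal (exp (A y)) * f y) \<partial>\<nu>)"
    using eq by simp
qed

lemma my_sum_mset_mono:
  fixes f g :: "'a \<Rightarrow> 'b::ordered_comm_monoid_add"
  shows "(\<And>y. y \<in># M \<Longrightarrow> f y \<le> g y) \<Longrightarrow> (\<Sum>y\<in>#M. f y) \<le> (\<Sum>y\<in>#M. g y)"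
  by (induction M) (auto intro: add_mono)

lemma my_sum_mset_cmult:
  fixes f :: "'a \<Rightarrow> ennreal"
  shows "c * (\<Sum>y\<in>#M. f y) = (\<Sum>y\<in>#M. c * f y)"
  by (induction M) (auto simp: distrib_left)

lemma my_sum_mset_add:
  fixes f :: "'a \<Rightarrow> 'b::comm_monoid_add"
  shows "(\<Sum>y\<in>#M. f y + g y) = (\<Sum>y\<in>#M. f y) + (\<Sum>y\<in>#M. g y)"
  by (induction M) (auto simp: algebra_simps)

lemma fix_lower:
  assumes ics: "is_ICS X k \<theta> F" and cX: "compact X"
    and mu: "prob_on X \<mu>" and fx: "dual_transfer X F A \<mu> = \<mu>"
    and f: "f \<in> borel_measurable (restrict_space borel X)"
  shows "integral\<^sup>N \<mu> f \<le> (\<integral>\<^sup>+x. (\<Sum>y\<in>#F x. ennreal (exp (A y)) * f y) \<partial>\<mu>)"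
proof -
  let ?S = "restrict_space borel X"
  define H where "H g x = (\<Sum>y\<in>#F x. ennreal (exp (A y)) * g y)" for g :: "'a \<Rightarrow> ennreal" and x
  define \<phi> where "\<phi> B = (\<integral>\<^sup>+ x. (\<Sum>y\<in>#F x. ennreal (exp (A y)) * indicator B y) \<partial>\<mu>)" for B
  have sn: "sets \<mu> = sets ?S" and pn: "prob_space \<mu>" using mu by (auto simp: prob_on_def)
  have spn: "space \<mu> = X" using sets_eq_imp_space_eq[OF sn] space_S[OF cX] by simp
  have sig: "sigma_sets X (sets ?S) = sets ?S"
    using sets.sigma_sets_eq[of ?S] space_S[OF cX] by simp
  have XS: "X \<in> sets ?S" using space_S[OF cX] by (metis sets.top)
  have mo: "\<mu> = measure_of X (sets ?S) \<phi>"
    using fx unfolding dual_transfer_def \<phi>_def by simp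
  have ms: "measure_space X (sigma_sets X (sets ?S)) \<phi>"
  proof (rule ccontr)
    assume "\<not> ?thesis"
    then have "emeasure \<mu> X = 0"
      by (subst mo) (simp add: emeasure_measure_of_conv)
    then show False using prob_space.emeasure_space_1[OF pn] spn by simp
  qed
  have em: "emeasure \<mu> B = \<phi> B" if "B \<in> sets ?S" for B
    using ms that sig by (subst mo) (simp add: emeasure_measure_of_conv)
  have fm: "f \<in> borel_measurable \<mu>"
    using f measurable_cong_sets[OF sn refl] by blast
  have "integral\<^sup>N \<mu> f \<le> integral\<^sup>N \<mu> (H f)"
    using fm
  proof (induction rule: borel_measurable_induct)
    case (cong f g)
    have "integral\<^sup>N \<mu> f = integral\<^sup>N \<mu> g" using cong(3) by (intro nn_integral_cong) auto
    also have "\<dots> \<le> integral\<^sup>N \<mu> (H g)" by (rule cong(4))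
    also have "\<dots> = integral\<^sup>N \<mu> (H f)"
    proof (intro nn_integral_cong)
      fix x assume "x \<in> space \<mu>"
      then have "set_mset (F x) \<subseteq> space \<mu>" using ICS_facts(2)[OF ics] spn by auto
      then show "H g x = H f x" unfolding H_def using cong(3)
        by (intro my_sum_mset_cong) auto
    qed
    finally show ?case .
  next
    case (set B)
    have "integral\<^sup>N \<mu> (indicator B) = emeasure \<mu> B" using set by simp
    also have "\<dots> = \<phi> B" using set sn by (intro em) simp
    finally show ?case unfolding \<phi>_def H_def by simp
  next
    case (mult u c)
    have "(\<integral>\<^sup>+x. c * u x \<partial>\<mu>) = c * integral\<^sup>N \<mu> u" using mult by (intro nn_integral_cmult)
    also have "\<dots> \<le> c * integral\<^sup>N \<mu> (H u)" using mult by (intro mult_left_mono) auto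
    also have "\<dots> \<le> (\<integral>\<^sup>+x. c * H u x \<partial>\<mu>)" by (rule nn_integral_cmult_le)
    also have "\<dots> = integral\<^sup>N \<mu> (H (\<lambda>x. c * u x))"
      unfolding H_def by (simp add: my_sum_mset_cmult mult.left_commute)
    finally show ?case .
  next
    case (add u v)
    have "(\<integral>\<^sup>+x. v x + u x \<partial>\<mu>) = integral\<^sup>N \<mu> v + integral\<^sup>N \<mu> u" using add by (intro nn_integral_add)
    also have "\<dots> \<le> integral\<^sup>N \<mu> (H v) + integral\<^sup>N \<mu> (H u)" using add by (intro add_mono)
    also have "\<dots> \<le> (\<integral>\<^sup>+x. H v x + H u x \<partial>\<mu>)" by (rule nn_integral_superadd)
    also have "\<dots> = integral\<^sup>N \<mu> (H (\<lambda>x. v x + u x))"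
      unfolding H_def by (simp add: my_sum_mset_add distrib_left)
    finally show ?case .
  next
    case (seq U)
    have "(SUP i. U i) = (\<lambda>x. SUP i. U i x)" by (rule ext) (rule SUP_apply)
    then have "integral\<^sup>N \<mu> (SUP i. U i) = (\<integral>\<^sup>+x. (SUP i. U i x) \<partial>\<mu>)" by simp
    also have "\<dots> = (SUP i. integral\<^sup>N \<mu> (U i))"
      using seq by (intro nn_integral_monotone_convergence_SUP) auto
    also have "\<dots> \<le> integral\<^sup>N \<mu> (H (SUP i. U i))"
    proof (rule SUP_least)
      fix i
      have "integral\<^sup>N \<mu> (U i) \<le> integral\<^sup>N \<mu> (H (U i))" by (rule seq.IH)
      also have "\<dots> \<le> integral\<^sup>N \<mu> (H (SUP i. U i))"
        unfolding H_def
        by (intro nn_integral_mono my_sum_mset_mono mult_left_mono) (auto simp: SUP_apply intro: SUP_upper)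
      finally show "integral\<^sup>N \<mu> (U i) \<le> integral\<^sup>N \<mu> (H (SUP i. U i))" .
    qed
    finally show ?case .
  qed
  then show ?thesis unfolding H_def .
qed

lemma core_bound:
  fixes a b c f h :: "nat \<Rightarrow> real"
  assumes sa: "(\<Sum>j<k. a j) = 1" and sb: "(\<Sum>j<k. b j) = 1"
    and a0: "\<And>j. j < k \<Longrightarrow> 0 \<le> a j" and b0: "\<And>j. j < k \<Longrightarrow> 0 \<le> b j"
    and ac: "\<And>j. j < k \<Longrightarrow> \<bar>a j - c j\<bar> \<le> a j * p"
    and cb: "\<And>j. j < k \<Longrightarrow> \<bar>c j - b j\<bar> \<le> b j * q"
    and fb: "\<And>j. j < k \<Longrightarrow> 0 \<le> f j \<and> f j \<le> Dm"
    and fh: "\<And>j. j < k \<Longrightarrow> f j - h j \<le> D"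
  shows "(\<Sum>j<k. a j * f j) \<le> (\<Sum>j<k. b j * h j) + Dm * (p + q) / 2 + D"
proof -
  have e1: "(\<Sum>j<k. a j * f j) = (\<Sum>j<k. (a j - b j) * f j) + (\<Sum>j<k. b j * (f j - h j)) + (\<Sum>j<k. b j * h j)"
    by (simp add: sum.distrib[symmetric] algebra_simps)
  have e2: "(\<Sum>j<k. b j * (f j - h j)) \<le> (\<Sum>j<k. b j * D)"
    using b0 fh by (intro sum_mono mult_left_mono) auto
  have e3: "(\<Sum>j<k. b j * D) = D" using sb by (simp add: sum_distrib_right[symmetric])
  have e4: "(\<Sum>j<k. (a j - b j) * f j) \<le> (\<Sum>j<k. ((a j - b j) + \<bar>a j - b j\<bar>) / 2 * Dm)"
  proof (rule sum_mono)
    fix j assume "j \<in> {..<k}"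
    then have j: "0 \<le> f j" "f j \<le> Dm" using fb by auto
    show "(a j - b j) * f j \<le> ((a j - b j) + \<bar>a j - b j\<bar>) / 2 * Dm"
    proof (cases "a j - b j \<ge> 0")
      case True
      have "(a j - b j) * f j \<le> (a j - b j) * Dm" using True j by (intro mult_left_mono) auto
      moreover have "((a j - b j) + \<bar>a j - b j\<bar>) / 2 * Dm = (a j - b j) * Dm" using True by simp
      ultimately show ?thesis by linarith
    next
      case False
      then have "(a j - b j) * f j \<le> 0" using j by (simp add: mult_nonpos_nonneg)
      then show ?thesis using False by simp
    qed
  qed
  have e5: "(\<Sum>j<k. ((a j - b j) + \<bar>a j - b j\<bar>) / 2 * Dm) = Dm / 2 * (\<Sum>j<k. \<bar>a j - b j\<bar>)"
  proof -
    have "(\<Sum>j<k. ((a j - b j) + \<bar>a j - b j\<bar>) / 2 * Dm) = (\<Sum>j<k. Dm / 2 * ((a j - b j) + \<bar>a j - b j\<bar>))"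
      by (intro sum.cong) auto
    also have "\<dots> = Dm / 2 * (\<Sum>j<k. (a j - b j) + \<bar>a j - b j\<bar>)"
      by (simp add: sum_distrib_left)
    also have "\<dots> = Dm / 2 * ((\<Sum>j<k. a j) - (\<Sum>j<k. b j) + (\<Sum>j<k. \<bar>a j - b j\<bar>))"
      by (simp add: sum.distrib sum_subtractf)
    finally show ?thesis using sa sb by simp
  qed
  have e6: "(\<Sum>j<k. \<bar>a j - b j\<bar>) \<le> (\<Sum>j<k. a j * p + b j * q)"
  proof (rule sum_mono)
    fix j assume "j \<in> {..<k}"
    then have "\<bar>a j - c j\<bar> \<le> a j * p" "\<bar>c j - b j\<bar> \<le> b j * q" using ac cb by auto
    then show "\<bar>a j - b j\<bar> \<le> a j * p + b j * q" by linarith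
  qed
  have e7: "(\<Sum>j<k. a j * p + b j * q) = p + q"
    using sa sb by (simp add: sum.distrib sum_distrib_right[symmetric])
  have Dm: "0 \<le> Dm"
  proof -
    have "k \<noteq> 0" using sa by (cases k) auto
    then show ?thesis using fb[of 0] by auto
  qed
  have "Dm / 2 * (\<Sum>j<k. \<bar>a j - b j\<bar>) \<le> Dm / 2 * (p + q)"
    using e6 e7 Dm by (intro mult_left_mono) auto
  then show ?thesis using e1 e2 e3 e4 e5 by (simp add: field_simps)
qed

lemma exp_diff_bound:
  fixes u v M :: real
  assumes "\<bar>u - v\<bar> \<le> M"
  shows "\<bar>exp u - exp v\<bar> \<le> exp u * (exp M - 1)"
proof (cases "u \<le> v")
  case True
  have "exp v = exp u * exp (v - u)" by (simp add: exp_diff)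
  moreover have "exp (v - u) \<le> exp M" using assms True by simp
  ultimately have "exp v - exp u \<le> exp u * (exp M - 1)" by (simp add: algebra_simps)
  then show ?thesis using True by simp
next
  case False
  have "exp v = exp u * exp (v - u)" by (simp add: exp_diff)
  moreover have "1 + (v - u) \<le> exp (v - u)" by (rule exp_ge_add_one_self)
  moreover have "1 + M \<le> exp M" by (rule exp_ge_add_one_self)
  moreover have "u - v \<le> M" using assms by simp
  ultimately have "exp u - exp v \<le> exp u * (exp M - 1)"
  proof -
    assume h: "exp v = exp u * exp (v - u)" "1 + (v - u) \<le> exp (v - u)" "1 + M \<le> exp M" "u - v \<le> M"
    have "exp u - exp v = exp u * (1 - exp (v - u))" using h(1) by (simp add: algebra_simps)
    also have "\<dots> \<le> exp u * (exp M - 1)" using h(2,3,4) by (intro mult_left_mono) (linarith, simp)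
    finally show ?thesis .
  qed
  then show ?thesis using False by simp
qed

lemma exp_half_bound:
  fixes t :: real
  assumes "0 \<le> t" "t \<le> 1"
  shows "(exp t - 1) / 2 \<le> t"
proof -
  have "exp t \<le> 1 + t + t\<^sup>2" by (rule exp_bound[OF assms])
  moreover have "t\<^sup>2 \<le> t" using assms by (simp add: power2_eq_square mult_left_le_one_le)
  ultimately show ?thesis by simp
qed

lemma pointwise_bound:
  fixes A1 A2 f :: "'a::metric_space \<Rightarrow> real"
  assumes x: "x \<in> X" and nA1: "normalized X F1 A1" and nA2: "normalized X F2 A2"
    and L: "mset xs = F1 x" "mset ys = F2 x" "length xs = k" "length ys = k"
      "set xs \<subseteq> X" "set ys \<subseteq> X"
    and dD: "\<And>j. j < k \<Longrightarrow> dist (xs ! j) (ys ! j) \<le> D"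
    and hN: "\<forall>y\<in>X. \<bar>A1 y - A2 y\<bar> \<le> N"
    and hL: "\<And>a b. a \<in> X \<Longrightarrow> b \<in> X \<Longrightarrow> \<bar>A2 a - A2 b\<bar> \<le> Lc * dist a b" "0 \<le> Lc"
    and fb: "\<And>y. y \<in> X \<Longrightarrow> 0 \<le> f y \<and> f y \<le> Dm"
    and fl: "\<And>a b. a \<in> X \<Longrightarrow> b \<in> X \<Longrightarrow> f a - f b \<le> dist a b"
  shows "(\<Sum>y\<in>#F1 x. exp (A1 y) * f y)
     \<le> (\<Sum>y\<in>#F2 x. exp (A2 y) * f y) + Dm * ((exp N - 1) + (exp (Lc * D) - 1)) / 2 + D"
proof -
  have xj: "xs ! j \<in> X" "ys ! j \<in> X" if "j < k" for j
    using L that by (auto intro!: subsetD[OF _ nth_mem])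
  have e1: "(\<Sum>y\<in>#F1 x. exp (A1 y) * f y) = (\<Sum>j<k. exp (A1 (xs ! j)) * f (xs ! j))"
    using sum_mset_list[OF L(1)] L(3) by simp
  have e2: "(\<Sum>y\<in>#F2 x. exp (A2 y) * f y) = (\<Sum>j<k. exp (A2 (ys ! j)) * f (ys ! j))"
    using sum_mset_list[OF L(2)] L(4) by simp
  have sa: "(\<Sum>j<k. exp (A1 (xs ! j))) = 1"
    using sum_mset_list[OF L(1), of "\<lambda>y. exp (A1 y)"] L(3) nA1 x by (simp add: normalized_def)
  have sb: "(\<Sum>j<k. exp (A2 (ys ! j))) = 1"
    using sum_mset_list[OF L(2), of "\<lambda>y. exp (A2 y)"] L(4) nA2 x by (simp add: normalized_def)
  have "(\<Sum>j<k. exp (A1 (xs ! j)) * f (xs ! j))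
      \<le> (\<Sum>j<k. exp (A2 (ys ! j)) * f (ys ! j)) + Dm * ((exp N - 1) + (exp (Lc * D) - 1)) / 2 + D"
  proof (rule core_bound[OF sa sb, where c="\<lambda>j. exp (A2 (xs ! j))"])
    fix j assume j: "j < k"
    show "0 \<le> exp (A1 (xs ! j))" "0 \<le> exp (A2 (ys ! j))" by auto
    show "\<bar>exp (A1 (xs ! j)) - exp (A2 (xs ! j))\<bar> \<le> exp (A1 (xs ! j)) * (exp N - 1)"
      using hN xj[OF j] by (intro exp_diff_bound) auto
    have "\<bar>A2 (ys ! j) - A2 (xs ! j)\<bar> \<le> Lc * dist (ys ! j) (xs ! j)"
      using hL(1) xj[OF j] by auto
    also have "\<dots> \<le> Lc * D" using dD[OF j] hL(2) by (simp add: dist_commute mult_left_mono)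
    finally have "\<bar>exp (A2 (ys ! j)) - exp (A2 (xs ! j))\<bar> \<le> exp (A2 (ys ! j)) * (exp (Lc * D) - 1)"
      by (rule exp_diff_bound)
    then show "\<bar>exp (A2 (xs ! j)) - exp (A2 (ys ! j))\<bar> \<le> exp (A2 (ys ! j)) * (exp (Lc * D) - 1)"
      by (simp add: abs_minus_commute)
    show "0 \<le> f (xs ! j) \<and> f (xs ! j) \<le> Dm" using fb xj[OF j] by auto
    have "f (xs ! j) - f (ys ! j) \<le> dist (xs ! j) (ys ! j)" using fl xj[OF j] by auto
    then show "f (xs ! j) - f (ys ! j) \<le> D" using dD[OF j] by linarith
  qed
  then show ?thesis using e1 e2 by simp
qed

lemma Lip_facts:
  fixes A :: "'a::metric_space \<Rightarrow> real"
  assumes "\<exists>L. L-lipschitz_on X A"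
  shows "0 \<le> Lip X A" "\<And>a b. a \<in> X \<Longrightarrow> b \<in> X \<Longrightarrow> \<bar>A a - A b\<bar> \<le> Lip X A * dist a b"
proof -
  have ne: "{L. L-lipschitz_on X A} \<noteq> {}" using assms by auto
  show "0 \<le> Lip X A" unfolding Lip_def
    using ne by (intro cInf_greatest) (auto dest: lipschitz_on_nonneg)
  fix a b assume a: "a \<in> X" and b: "b \<in> X"
  show "\<bar>A a - A b\<bar> \<le> Lip X A * dist a b"
  proof (cases "a = b")
    case True then show ?thesis by simp
  next
    case False
    then have d: "0 < dist a b" by simp
    have "\<bar>A a - A b\<bar> / dist a b \<le> Lip X A" unfolding Lip_def
    proof (rule cInf_greatest[OF ne])
      fix L assume "L \<in> {L. L-lipschitz_on X A}"
      then have "dist (A a) (A b) \<le> L * dist a b" using a b by (auto dest: lipschitz_onD)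
      then show "\<bar>A a - A b\<bar> / dist a b \<le> L" using d by (simp add: dist_real_def field_simps)
    qed
    then show ?thesis using d by (simp add: field_simps)
  qed
qed

lemma lip1_facts:
  fixes f :: "'a::metric_space \<Rightarrow> real"
  assumes "1-lipschitz_on X f"
  shows "continuous_on X f" "\<And>a b. a \<in> X \<Longrightarrow> b \<in> X \<Longrightarrow> f a - f b \<le> dist a b"
proof -
  show "continuous_on X f" using assms by (rule lipschitz_on_continuous_on)
  fix a b assume "a \<in> X" "b \<in> X"
  then have "dist (f a) (f b) \<le> 1 * dist a b" using assms by (intro lipschitz_onD)
  then show "f a - f b \<le> dist a b" by (simp add: dist_real_def)
qed

lemma shift_facts:
  fixes f :: "'a::metric_space \<Rightarrow> real"
  assumes cX: "compact X" and ne: "X \<noteq> {}" and f: "1-lipschitz_on X f"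
  obtains m where "\<And>y. y \<in> X \<Longrightarrow> 0 \<le> f y - m \<and> f y - m \<le> diameter X"
proof -
  have c: "continuous_on X f" using lip1_facts[OF f] by simp
  have "bounded (f ` X)" using compact_continuous_image[OF c cX] by (rule compact_imp_bounded)
  then have bb: "bdd_below (f ` X)" by (rule bounded_imp_bdd_below)
  have bX: "bounded X" using cX by (rule compact_imp_bounded)
  define m where "m = Inf (f ` X)"
  have "0 \<le> f y - m \<and> f y - m \<le> diameter X" if y: "y \<in> X" for y
  proof
    show "0 \<le> f y - m" using cInf_lower[OF _ bb, of "f y"] y by (simp add: m_def)
    have "f y - diameter X \<le> m" unfolding m_def
    proof (rule cInf_greatest)
      show "f ` X \<noteq> {}" using ne by simp
      fix z assume "z \<in> f ` X"
      then obtain w where w: "w \<in> X" "z = f w" by auto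
      have "f y - f w \<le> dist y w" using lip1_facts(2)[OF f y w(1)] .
      also have "\<dots> \<le> diameter X" using diameter_bounded_bound[OF bX y w(1)] .
      finally show "f y - diameter X \<le> z" using w by simp
    qed
    then show "f y - m \<le> diameter X" by simp
  qed
  then show ?thesis using that by blast
qed

lemma cont_integrable:
  fixes f :: "'a::metric_space \<Rightarrow> real"
  assumes cX: "compact X" and mu: "prob_on X \<mu>" and c: "continuous_on X f"
  shows "integrable \<mu> f" "f \<in> borel_measurable \<mu>"
proof -
  have sn: "sets \<mu> = sets (restrict_space borel X)" and pn: "prob_space \<mu>"
    using mu by (auto simp: prob_on_def)
  have spn: "space \<mu> = X" using sets_eq_imp_space_eq[OF sn] space_S[OF cX] by simp
  show fm: "f \<in> borel_measurable \<mu>"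
    using borel_measurable_continuous_on_restrict[OF c] measurable_cong_sets[OF sn refl] by blast
  have "bounded (f ` X)" using compact_continuous_image[OF c cX] by (rule compact_imp_bounded)
  then obtain B where B: "\<And>x. x \<in> X \<Longrightarrow> norm (f x) \<le> B" unfolding bounded_iff by auto
  interpret prob_space \<mu> by (rule pn)
  show "integrable \<mu> f"
    by (rule integrable_const_bound[where B=B]) (use B spn fm in auto)
qed

lemma shifted_integral:
  fixes f :: "'a \<Rightarrow> real"
  assumes pn: "prob_space \<mu>" and i: "integrable \<mu> f"
  shows "(\<integral>x. f x - m \<partial>\<mu>) = (\<integral>x. f x \<partial>\<mu>) - m"
proof -
  interpret prob_space \<mu> by (rule pn)
  show ?thesis using i by (simp add: integral_diff prob_space)
qed

lemma W1_diff_le_diam: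
  fixes f :: "'a::metric_space \<Rightarrow> real"
  assumes cX: "compact X" and ne: "X \<noteq> {}" and mu: "prob_on X \<mu>" and nu: "prob_on X \<nu>"
    and f: "1-lipschitz_on X f"
  shows "(\<integral>x. f x \<partial>\<mu>) - (\<integral>x. f x \<partial>\<nu>) \<le> diameter X"
proof -
  obtain m where m: "\<And>y. y \<in> X \<Longrightarrow> 0 \<le> f y - m \<and> f y - m \<le> diameter X"
    using shift_facts[OF cX ne f] by blast
  have c: "continuous_on X f" using lip1_facts(1)[OF f] .
  have c': "continuous_on X (\<lambda>x. f x - m)" by (intro continuous_intros c)
  have pm: "prob_space \<mu>" "prob_space \<nu>" using mu nu by (auto simp: prob_on_def)
  have spm: "space \<mu> = X" "space \<nu> = X"
    using mu nu sets_eq_imp_space_eq space_S[OF cX] by (auto simp: prob_on_def)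
  have a1: "AE x in \<mu>. f x - m \<le> diameter X" using m spm by (intro AE_I2) auto
  have a2: "AE x in \<nu>. 0 \<le> f x - m" using m spm by (intro AE_I2) auto
  have "(\<integral>x. f x - m \<partial>\<mu>) \<le> diameter X"
    by (rule prob_space.integral_le_const[OF pm(1) cont_integrable(1)[OF cX mu c'] a1])
  moreover have "0 \<le> (\<integral>x. f x - m \<partial>\<nu>)"
    by (rule prob_space.integral_ge_const[OF pm(2) cont_integrable(1)[OF cX nu c'] a2])
  ultimately show ?thesis
    using shifted_integral[OF pm(1) cont_integrable(1)[OF cX mu c]]
      shifted_integral[OF pm(2) cont_integrable(1)[OF cX nu c]] by simp
qed

lemma W1_facts:
  assumes cX: "compact X" and ne: "X \<noteq> {}" and mu: "prob_on X \<mu>" and nu: "prob_on X \<nu>"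
  shows "\<And>f. 1-lipschitz_on X f \<Longrightarrow> (\<integral>x. f x \<partial>\<mu>) - (\<integral>x. f x \<partial>\<nu>) \<le> W1 X \<mu> \<nu>"
    and "\<And>B. (\<And>f. 1-lipschitz_on X f \<Longrightarrow> (\<integral>x. f x \<partial>\<mu>) - (\<integral>x. f x \<partial>\<nu>) \<le> B) \<Longrightarrow> W1 X \<mu> \<nu> \<le> B"
    and "0 \<le> W1 X \<mu> \<nu>"
proof -
  have bdd: "bdd_above ((\<lambda>f::'a\<Rightarrow>real. (\<integral>x. f x \<partial>\<mu>) - (\<integral>x. f x \<partial>\<nu>)) ` {f. 1-lipschitz_on X f})"
  proof (rule bdd_aboveI)
    fix y assume "y \<in> (\<lambda>f::'a\<Rightarrow>real. (\<integral>x. f x \<partial>\<mu>) - (\<integral>x. f x \<partial>\<nu>)) ` {f. 1-lipschitz_on X f}"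
    then obtain f where f: "1-lipschitz_on X f" "y = (\<integral>x. f x \<partial>\<mu>) - (\<integral>x. f x \<partial>\<nu>)" by auto
    show "y \<le> diameter X" using W1_diff_le_diam[OF cX ne mu nu f(1)] f(2) by simp
  qed
  have z: "(\<lambda>_. 0::real) \<in> {f::'a\<Rightarrow>real. 1-lipschitz_on X f}"
    using lipschitz_on_le[OF lipschitz_on_constant[of X "0::real"], of 1] by simp
  then have ne': "{f::'a\<Rightarrow>real. 1-lipschitz_on X f} \<noteq> {}" by blast
  show ge: "\<And>f. 1-lipschitz_on X f \<Longrightarrow> (\<integral>x. f x \<partial>\<mu>) - (\<integral>x. f x \<partial>\<nu>) \<le> W1 X \<mu> \<nu>"
    unfolding W1_def by (rule cSUP_upper[OF _ bdd]) simp
  show "\<And>B. (\<And>f. 1-lipschitz_on X f \<Longrightarrow> (\<integral>x. f x \<partial>\<mu>) - (\<integral>x. f x \<partial>\<nu>) \<le> B) \<Longrightarrow> W1 X \<mu> \<nu> \<le> B"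
    unfolding W1_def by (rule cSUP_least[OF ne']) simp
  show "0 \<le> W1 X \<mu> \<nu>" using ge[of "\<lambda>_. 0"] z by simp
qed

lemma W1_triangle:
  assumes cX: "compact X" and ne: "X \<noteq> {}" and mu: "prob_on X \<mu>" and nu: "prob_on X \<nu>"
    and rho: "prob_on X \<rho>"
  shows "W1 X \<mu> \<rho> \<le> W1 X \<mu> \<nu> + W1 X \<nu> \<rho>"
proof (rule W1_facts(2)[OF cX ne mu rho])
  fix f :: "'a \<Rightarrow> real" assume f: "1-lipschitz_on X f"
  have "(\<integral>x. f x \<partial>\<mu>) - (\<integral>x. f x \<partial>\<nu>) \<le> W1 X \<mu> \<nu>" by (rule W1_facts(1)[OF cX ne mu nu f])
  moreover have "(\<integral>x. f x \<partial>\<nu>) - (\<integral>x. f x \<partial>\<rho>) \<le> W1 X \<nu> \<rho>" by (rule W1_facts(1)[OF cX ne nu rho f])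
  ultimately show "(\<integral>x. f x \<partial>\<mu>) - (\<integral>x. f x \<partial>\<rho>) \<le> W1 X \<mu> \<nu> + W1 X \<nu> \<rho>" by simp
qed

lemma W1_self:
  assumes cX: "compact X" and ne: "X \<noteq> {}" and mu: "prob_on X \<mu>"
  shows "W1 X \<mu> \<mu> = 0"
  using W1_facts(2)[OF cX ne mu mu, of 0] W1_facts(3)[OF cX ne mu mu] by simp

lemma dinf_facts:
  assumes ics1: "is_ICS X k \<theta>1 F1" and ics2: "is_ICS X k \<theta> F2" and cX: "compact X"
    and ne: "X \<noteq> {}" and kpos: "0 < k"
  shows "0 \<le> d_infty X F1 F2"
    and "\<And>x e. x \<in> X \<Longrightarrow> 0 < e \<Longrightarrow> \<exists>xs ys. mset xs = F1 x \<and> mset ys = F2 x \<and>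
           (\<forall>j<k. dist (xs ! j) (ys ! j) \<le> d_infty X F1 F2 + e)"
proof -
  define I where "I x = {(MAX j\<in>{..<length xs}. dist (xs ! j) (ys ! j)) | xs ys. mset xs = F1 x \<and> mset ys = F2 x}" for x
  have dI: "d_infty X F1 F2 = (SUP x\<in>X. Inf (I x))" by (simp add: d_infty_def I_def)
  have bX: "bounded X" using cX by (rule compact_imp_bounded)
  have elem: "0 \<le> (MAX j\<in>{..<length xs}. dist (xs ! j) (ys ! j)) \<and>
      (MAX j\<in>{..<length xs}. dist (xs ! j) (ys ! j)) \<le> diameter X \<and>
      (\<forall>j<k. dist (xs ! j) (ys ! j) \<le> (MAX j\<in>{..<length xs}. dist (xs ! j) (ys ! j)))"
    if x: "x \<in> X" and h: "mset xs = F1 x" "mset ys = F2 x" for x xs ys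
  proof -
    have lx: "length xs = k" using ICS_facts(1)[OF ics1 x] h(1) by (metis size_mset)
    have ly: "length ys = k" using ICS_facts(1)[OF ics2 x] h(2) by (metis size_mset)
    have sx: "set xs \<subseteq> X" using ICS_facts(2)[OF ics1 x] h(1) by (metis set_mset_mset)
    have sy: "set ys \<subseteq> X" using ICS_facts(2)[OF ics2 x] h(2) by (metis set_mset_mset)
    have ge: "\<forall>j<k. dist (xs ! j) (ys ! j) \<le> (MAX j\<in>{..<length xs}. dist (xs ! j) (ys ! j))"
      using lx by (auto intro!: Max_ge)
    have "(MAX j\<in>{..<length xs}. dist (xs ! j) (ys ! j)) \<le> diameter X"
    proof (rule Max.boundedI)
      show "finite ((\<lambda>j. dist (xs ! j) (ys ! j)) ` {..<length xs})" by simp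
      show "(\<lambda>j. dist (xs ! j) (ys ! j)) ` {..<length xs} \<noteq> {}" using lx kpos by auto
      fix a assume "a \<in> (\<lambda>j. dist (xs ! j) (ys ! j)) ` {..<length xs}"
      then obtain j where j: "j < k" "a = dist (xs ! j) (ys ! j)" using lx by auto
      have "xs ! j \<in> X" "ys ! j \<in> X" using j lx ly sx sy by (auto intro!: subsetD[OF _ nth_mem])
      then show "a \<le> diameter X" using j diameter_bounded_bound[OF bX] by simp
    qed
    moreover have "0 \<le> (MAX j\<in>{..<length xs}. dist (xs ! j) (ys ! j))"
      using ge kpos zero_le_dist order_trans by blast
    ultimately show ?thesis using ge by simp
  qed
  have Ine: "I x \<noteq> {}" for x
    unfolding I_def using mset_lst[of F1 x] mset_lst[of F2 x] by blast
  have Ibd: "bdd_below (I x)" if "x \<in> X" for x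
    unfolding I_def using elem[OF that] by (auto intro!: bdd_belowI[of _ 0])
  have I0: "0 \<le> Inf (I x)" if "x \<in> X" for x
    using Ine elem[OF that] by (intro cInf_greatest) (auto simp: I_def)
  have Id: "Inf (I x) \<le> diameter X" if x: "x \<in> X" for x
  proof -
    obtain y where y: "y \<in> I x" using Ine by blast
    then have "Inf (I x) \<le> y" by (intro cInf_lower Ibd x)
    also have "y \<le> diameter X" using y elem[OF x] by (auto simp: I_def)
    finally show ?thesis .
  qed
  have bddS: "bdd_above ((\<lambda>x. Inf (I x)) ` X)"
    using Id by (intro bdd_aboveI2[where M="diameter X"]) auto
  have up: "Inf (I x) \<le> d_infty X F1 F2" if "x \<in> X" for x
    unfolding dI using that bddS by (rule cSUP_upper)
  obtain x0 where "x0 \<in> X" using ne by blast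
  then show "0 \<le> d_infty X F1 F2" using I0 up order_trans by blast
  fix x e assume x: "x \<in> X" and e: "(0::real) < e"
  have "Inf (I x) < d_infty X F1 F2 + e" using up[OF x] e by simp
  then obtain y where y: "y \<in> I x" "y < d_infty X F1 F2 + e" using cInf_lessD[OF Ine] by blast
  then obtain xs ys where h: "mset xs = F1 x" "mset ys = F2 x"
    "y = (MAX j\<in>{..<length xs}. dist (xs ! j) (ys ! j))" unfolding I_def by blast
  show "\<exists>xs ys. mset xs = F1 x \<and> mset ys = F2 x \<and> (\<forall>j<k. dist (xs ! j) (ys ! j) \<le> d_infty X F1 F2 + e)"
    using h elem[OF x h(1,2)] y(2) by (intro exI[of _ xs] exI[of _ ys]) force
qed

lemma key_f:
  fixes f :: "'a::metric_space \<Rightarrow> real"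
  assumes ics1: "is_ICS X k \<theta>1 F1" and ics2: "is_ICS X k \<theta> F2" and th: "0 \<le> \<theta>"
    and cX: "compact X" and ne: "X \<noteq> {}"
    and cA2: "continuous_on X A2" and nA2: "normalized X F2 A2"
    and mu: "prob_on X \<mu>1" and fx: "dual_transfer X F1 A1 \<mu>1 = \<mu>1"
    and cf: "continuous_on X f" and fb: "\<And>y. y \<in> X \<Longrightarrow> 0 \<le> f y"
    and pw: "\<And>x. x \<in> X \<Longrightarrow> (\<Sum>y\<in>#F1 x. exp (A1 y) * f y) \<le> (\<Sum>y\<in>#F2 x. exp (A2 y) * f y) + Bp"
  shows "(\<integral>x. f x \<partial>\<mu>1) \<le> (\<integral>x. f x \<partial>(dual_transfer X F2 A2 \<mu>1)) + Bp"
proof -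
  let ?S = "restrict_space borel X"
  define \<nu> where "\<nu> = dual_transfer X F2 A2 \<mu>1"
  define g2 where "g2 x = (\<Sum>y\<in>#F2 x. exp (A2 y) * f y)" for x
  have nu: "prob_on X \<nu>" unfolding \<nu>_def by (rule dt_facts(2)[OF ics2 th cX ne cA2 nA2 mu])
  have pm: "prob_space \<mu>1" "prob_space \<nu>" using mu nu by (auto simp: prob_on_def)
  have spm: "space \<mu>1 = X" "space \<nu> = X"
    using mu nu sets_eq_imp_space_eq space_S[OF cX] by (auto simp: prob_on_def)
  have cg2: "continuous_on X g2" unfolding g2_def
    by (intro ICS_cont[OF ics2 th cX]) (auto intro!: continuous_intros cA2 cf)
  have if1: "integrable \<mu>1 f" using cont_integrable[OF cX mu cf] by simp
  have if2: "integrable \<nu> f" using cont_integrable[OF cX nu cf] by simp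
  have ig2: "integrable \<mu>1 g2" using cont_integrable[OF cX mu cg2] by simp
  have fm: "f \<in> borel_measurable ?S" by (rule borel_measurable_continuous_on_restrict[OF cf])
  have fe: "(\<lambda>x. ennreal (f x)) \<in> borel_measurable ?S"
    using measurable_compose[OF fm measurable_ennreal] by (simp add: comp_def)
  have g2nn: "0 \<le> g2 x" if "x \<in> X" for x
    unfolding g2_def using ICS_facts(2)[OF ics2 that] fb by (intro my_sum_mset_nonneg) auto
  have g1nn: "0 \<le> (\<Sum>y\<in>#F1 x. exp (A1 y) * f y)" if "x \<in> X" for x
    using ICS_facts(2)[OF ics1 that] fb by (intro my_sum_mset_nonneg) auto
  have pnn: "0 \<le> g2 x + Bp" if "x \<in> X" for x
    using g1nn[OF that] pw[OF that] unfolding g2_def by linarith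
  have conv: "(\<Sum>y\<in>#F x. ennreal (exp (A y)) * ennreal (f y)) = ennreal (\<Sum>y\<in>#F x. exp (A y) * f y)"
    if "set_mset (F x) \<subseteq> X" for F :: "'a \<Rightarrow> 'a multiset" and A x
  proof -
    have "(\<Sum>y\<in>#F x. ennreal (exp (A y)) * ennreal (f y)) = (\<Sum>y\<in>#F x. ennreal (exp (A y) * f y))"
      using that fb by (intro my_sum_mset_cong) (auto simp: ennreal_mult)
    also have "\<dots> = ennreal (\<Sum>y\<in>#F x. exp (A y) * f y)"
      using that fb by (intro sum_mset_ennreal) auto
    finally show ?thesis .
  qed
  have "ennreal (\<integral>x. f x \<partial>\<mu>1) = (\<integral>\<^sup>+x. ennreal (f x) \<partial>\<mu>1)"
    using spm fb by (intro nn_integral_eq_integral[symmetric] if1 AE_I2) auto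
  also have "\<dots> \<le> (\<integral>\<^sup>+x. (\<Sum>y\<in>#F1 x. ennreal (exp (A1 y)) * ennreal (f y)) \<partial>\<mu>1)"
    by (rule fix_lower[OF ics1 cX mu fx fe])
  also have "\<dots> \<le> (\<integral>\<^sup>+x. ennreal (g2 x + Bp) \<partial>\<mu>1)"
  proof (rule nn_integral_mono)
    fix x assume "x \<in> space \<mu>1"
    then have x: "x \<in> X" using spm by simp
    show "(\<Sum>y\<in>#F1 x. ennreal (exp (A1 y)) * ennreal (f y)) \<le> ennreal (g2 x + Bp)"
      using conv[where F=F1 and A=A1 and x=x, OF ICS_facts(2)[OF ics1 x]] pw[OF x] by (simp add: g2_def ennreal_leI)
  qed
  also have "\<dots> = ennreal (\<integral>x. g2 x + Bp \<partial>\<mu>1)"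
    using spm pnn by (intro nn_integral_eq_integral Bochner_Integration.integrable_add ig2
        finite_measure.integrable_const prob_space.finite_measure pm AE_I2) auto
  also have "(\<integral>x. g2 x + Bp \<partial>\<mu>1) = (\<integral>x. g2 x \<partial>\<mu>1) + Bp"
    using shifted_integral[OF pm(1) ig2, of "-Bp"] by simp
  finally have A: "ennreal (\<integral>x. f x \<partial>\<mu>1) \<le> ennreal ((\<integral>x. g2 x \<partial>\<mu>1) + Bp)" .
  have "ennreal (\<integral>x. f x \<partial>\<nu>) = (\<integral>\<^sup>+x. ennreal (f x) \<partial>\<nu>)"
    using spm fb by (intro nn_integral_eq_integral[symmetric] if2 AE_I2) auto
  also have "\<dots> = (\<integral>\<^sup>+x. (\<Sum>y\<in>#F2 x. ennreal (exp (A2 y)) * ennreal (f y)) \<partial>\<mu>1)"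
    unfolding \<nu>_def by (rule dt_facts(3)[OF ics2 th cX ne cA2 nA2 mu fe])
  also have "\<dots> = (\<integral>\<^sup>+x. ennreal (g2 x) \<partial>\<mu>1)"
  proof (rule nn_integral_cong)
    fix x assume "x \<in> space \<mu>1"
    then have x: "x \<in> X" using spm by simp
    show "(\<Sum>y\<in>#F2 x. ennreal (exp (A2 y)) * ennreal (f y)) = ennreal (g2 x)"
      using conv[where F=F2 and A=A2 and x=x, OF ICS_facts(2)[OF ics2 x]] by (simp add: g2_def)
  qed
  also have "\<dots> = ennreal (\<integral>x. g2 x \<partial>\<mu>1)"
    using spm g2nn by (intro nn_integral_eq_integral ig2 AE_I2) auto
  finally have B: "ennreal (\<integral>x. f x \<partial>\<nu>) = ennreal (\<integral>x. g2 x \<partial>\<mu>1)" .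
  have i1: "0 \<le> (\<integral>x. f x \<partial>\<nu>)" using spm fb by (intro integral_nonneg_AE AE_I2) auto
  have i2: "0 \<le> (\<integral>x. g2 x \<partial>\<mu>1)" using spm g2nn by (intro integral_nonneg_AE AE_I2) auto
  have i3: "0 \<le> (\<integral>x. f x \<partial>\<mu>1)" using spm fb by (intro integral_nonneg_AE AE_I2) auto
  have eq: "(\<integral>x. f x \<partial>\<nu>) = (\<integral>x. g2 x \<partial>\<mu>1)" using B i1 i2 by simp
  have "(\<integral>x. f x \<partial>\<mu>1) \<le> (\<integral>x. g2 x \<partial>\<mu>1) + Bp"
  proof -
    have "0 \<le> (\<integral>x. g2 x + Bp \<partial>\<mu>1)" using spm pnn by (intro integral_nonneg_AE AE_I2) auto
    then have R: "0 \<le> (\<integral>x. g2 x \<partial>\<mu>1) + Bp" using shifted_integral[OF pm(1) ig2, of "-Bp"] by simp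
    then show ?thesis using A by (simp add: ennreal_le_iff)
  qed
  then show ?thesis using eq unfolding \<nu>_def by simp
qed

lemma key_W1:
  fixes A1 A2 :: "'a::metric_space \<Rightarrow> real"
  assumes ics1: "is_ICS X k \<theta>1 F1" and ics2: "is_ICS X k \<theta> F2" and th: "0 \<le> \<theta>"
    and cX: "compact X" and ne: "X \<noteq> {}" and kpos: "0 < k"
    and nA1: "normalized X F1 A1" and nA2: "normalized X F2 A2"
    and lipA2: "\<exists>L. L-lipschitz_on X A2"
    and mu: "prob_on X \<mu>1" and fx: "dual_transfer X F1 A1 \<mu>1 = \<mu>1"
    and hN: "\<forall>x\<in>X. \<bar>A1 x - A2 x\<bar> \<le> N"
  shows "W1 X \<mu>1 (dual_transfer X F2 A2 \<mu>1)
     \<le> diameter X * N + (Lip X A2 * diameter X + 1) * d_infty X F1 F2"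
proof -
  define \<nu> where "\<nu> = dual_transfer X F2 A2 \<mu>1"
  define Lc where "Lc = Lip X A2"
  define Dm where "Dm = diameter X"
  define dinf where "dinf = d_infty X F1 F2"
  define Bt where "Bt = Dm * N + (Lc * Dm + 1) * dinf"
  have cA2: "continuous_on X A2" using lipA2 lipschitz_on_continuous_on by blast
  have nu: "prob_on X \<nu>" unfolding \<nu>_def by (rule dt_facts(2)[OF ics2 th cX ne cA2 nA2 mu])
  have Lc0: "0 \<le> Lc" and Lc: "\<And>a b. a \<in> X \<Longrightarrow> b \<in> X \<Longrightarrow> \<bar>A2 a - A2 b\<bar> \<le> Lc * dist a b"
    using Lip_facts[OF lipA2] unfolding Lc_def by auto
  have d0: "0 \<le> dinf" unfolding dinf_def by (rule dinf_facts(1)[OF ics1 ics2 cX ne kpos])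
  have Dm0: "0 \<le> Dm" unfolding Dm_def using cX by (intro diameter_ge_0 compact_imp_bounded)
  have N0: "0 \<le> N" using ne hN by force
  have main: "(\<integral>x. f x \<partial>\<mu>1) - (\<integral>x. f x \<partial>\<nu>) \<le> Bt" if f: "1-lipschitz_on X f" for f :: "'a \<Rightarrow> real"
  proof (cases "1 \<le> N \<or> 1 \<le> Lc * dinf")
    case True
    have "(\<integral>x. f x \<partial>\<mu>1) - (\<integral>x. f x \<partial>\<nu>) \<le> Dm"
      unfolding Dm_def by (rule W1_diff_le_diam[OF cX ne mu nu f])
    also have "Dm \<le> Bt"
    proof (cases "1 \<le> N")
      case True
      have "Dm \<le> Dm * N" using True Dm0 by (simp add: mult_le_cancel_left1)
      moreover have "0 \<le> (Lc * Dm + 1) * dinf" using Lc0 Dm0 d0 by simp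
      ultimately show ?thesis unfolding Bt_def by linarith
    next
      case False
      then have h: "1 \<le> Lc * dinf" using \<open>1 \<le> N \<or> 1 \<le> Lc * dinf\<close> by simp
      have "Dm \<le> Dm * (Lc * dinf)" using h Dm0 by (simp add: mult_le_cancel_left1)
      also have "\<dots> \<le> (Lc * Dm + 1) * dinf" using d0 by (simp add: algebra_simps)
      finally show ?thesis unfolding Bt_def using Dm0 N0 by (smt (verit) mult_nonneg_nonneg)
    qed
    finally show ?thesis .
  next
    case False
    then have N1: "N < 1" and Ld1: "Lc * dinf < 1" by auto
    obtain m where m: "\<And>y. y \<in> X \<Longrightarrow> 0 \<le> f y - m \<and> f y - m \<le> diameter X"
      using shift_facts[OF cX ne f] by blast
    define f' where "f' y = f y - m" for y
    have cf: "continuous_on X f" using lip1_facts(1)[OF f] .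
    have cf': "continuous_on X f'" unfolding f'_def by (intro continuous_intros cf)
    have pm: "prob_space \<mu>1" "prob_space \<nu>" using mu nu by (auto simp: prob_on_def)
    have sh: "(\<integral>x. f x \<partial>\<mu>1) - (\<integral>x. f x \<partial>\<nu>) = (\<integral>x. f' x \<partial>\<mu>1) - (\<integral>x. f' x \<partial>\<nu>)"
      unfolding f'_def
      using shifted_integral[OF pm(1) cont_integrable(1)[OF cX mu cf], of m]
        shifted_integral[OF pm(2) cont_integrable(1)[OF cX nu cf], of m] by simp
    have fb': "\<And>y. y \<in> X \<Longrightarrow> 0 \<le> f' y \<and> f' y \<le> Dm" using m unfolding f'_def Dm_def by auto
    have fl': "\<And>a b. a \<in> X \<Longrightarrow> b \<in> X \<Longrightarrow> f' a - f' b \<le> dist a b"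
      using lip1_facts(2)[OF f] unfolding f'_def by simp
    have "(\<integral>x. f' x \<partial>\<mu>1) - (\<integral>x. f' x \<partial>\<nu>) \<le> Bt"
    proof (rule field_le_epsilon)
      fix e :: real assume e: "0 < e"
      define \<epsilon> where "\<epsilon> = min ((1 - Lc * dinf) / (Lc + 1)) (e / (Lc * Dm + 1))"
      have LD0: "0 \<le> Lc * Dm" using Lc0 Dm0 by simp
      then have eps0: "0 < \<epsilon>" unfolding \<epsilon>_def using Ld1 Lc0 e by (simp add: add_pos_nonneg)
      have "Lc * \<epsilon> \<le> Lc * ((1 - Lc * dinf) / (Lc + 1))"
        unfolding \<epsilon>_def using Lc0 by (intro mult_left_mono) auto
      also have "\<dots> = (Lc / (Lc + 1)) * (1 - Lc * dinf)" using Lc0 by (simp add: field_simps)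
      also have "\<dots> \<le> 1 * (1 - Lc * dinf)" using Lc0 Ld1 by (intro mult_right_mono) auto
      finally have LD1: "Lc * (dinf + \<epsilon>) \<le> 1" by (simp add: algebra_simps)
      have "(Lc * Dm + 1) * \<epsilon> \<le> (Lc * Dm + 1) * (e / (Lc * Dm + 1))"
        unfolding \<epsilon>_def using Lc0 Dm0 by (intro mult_left_mono) auto
      then have epse: "(Lc * Dm + 1) * \<epsilon> \<le> e" using LD0 by simp
      define Bp where "Bp = Dm * (N + Lc * (dinf + \<epsilon>)) + (dinf + \<epsilon>)"
      have pw: "(\<Sum>y\<in>#F1 x. exp (A1 y) * f' y) \<le> (\<Sum>y\<in>#F2 x. exp (A2 y) * f' y) + Bp"
        if x: "x \<in> X" for x
      proof -
        obtain xs ys where h: "mset xs = F1 x" "mset ys = F2 x"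
          "\<forall>j<k. dist (xs ! j) (ys ! j) \<le> dinf + \<epsilon>"
          using dinf_facts(2)[OF ics1 ics2 cX ne kpos x eps0] unfolding dinf_def by blast
        have lx: "length xs = k" using ICS_facts(1)[OF ics1 x] h(1) by (metis size_mset)
        have ly: "length ys = k" using ICS_facts(1)[OF ics2 x] h(2) by (metis size_mset)
        have sx: "set xs \<subseteq> X" using ICS_facts(2)[OF ics1 x] h(1) by (metis set_mset_mset)
        have sy: "set ys \<subseteq> X" using ICS_facts(2)[OF ics2 x] h(2) by (metis set_mset_mset)
        have "(\<Sum>y\<in>#F1 x. exp (A1 y) * f' y)
          \<le> (\<Sum>y\<in>#F2 x. exp (A2 y) * f' y) + Dm * ((exp N - 1) + (exp (Lc * (dinf + \<epsilon>)) - 1)) / 2 + (dinf + \<epsilon>)"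
          by (rule pointwise_bound[OF x nA1 nA2 h(1,2) lx ly sx sy _ hN Lc Lc0 fb' fl']) (use h(3) in auto)
        also have "Dm * ((exp N - 1) + (exp (Lc * (dinf + \<epsilon>)) - 1)) / 2 \<le> Dm * (N + Lc * (dinf + \<epsilon>))"
        proof -
          have "(exp N - 1) / 2 \<le> N" using N0 N1 by (intro exp_half_bound) auto
          moreover have "(exp (Lc * (dinf + \<epsilon>)) - 1) / 2 \<le> Lc * (dinf + \<epsilon>)"
            using Lc0 d0 eps0 LD1 by (intro exp_half_bound) auto
          ultimately have "((exp N - 1) + (exp (Lc * (dinf + \<epsilon>)) - 1)) / 2 \<le> N + Lc * (dinf + \<epsilon>)"
            by simp
          then have "Dm * (((exp N - 1) + (exp (Lc * (dinf + \<epsilon>)) - 1)) / 2) \<le> Dm * (N + Lc * (dinf + \<epsilon>))"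
            using Dm0 by (rule mult_left_mono)
          then show ?thesis by simp

        qed
        finally show ?thesis unfolding Bp_def by simp
      qed
      have "(\<integral>x. f' x \<partial>\<mu>1) \<le> (\<integral>x. f' x \<partial>\<nu>) + Bp"
        unfolding \<nu>_def
        by (rule key_f[OF ics1 ics2 th cX ne cA2 nA2 mu fx cf' _ pw]) (use fb' in auto)
      moreover have "Bp = Bt + (Lc * Dm + 1) * \<epsilon>" unfolding Bp_def Bt_def by (simp add: algebra_simps)
      ultimately show "(\<integral>x. f' x \<partial>\<mu>1) - (\<integral>x. f' x \<partial>\<nu>) \<le> Bt + e" using epse by simp
    qed
    then show ?thesis using sh by simp
  qed
  have "W1 X \<mu>1 \<nu> \<le> Bt" by (rule W1_facts(2)[OF cX ne mu nu main])
  then show ?thesis unfolding Bt_def Lc_def Dm_def dinf_def \<nu>_def by (simp add: algebra_simps)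
qed

theorem mainTheorem9:
  fixes X :: "'a::metric_space set" and k :: nat
    and F1 F2 :: "'a \<Rightarrow> 'a multiset" and A1 A2 :: "'a \<Rightarrow> real"
    and \<theta> C lam :: real and \<mu>1 \<mu>2 :: "'a measure"
  assumes "compact X" "X \<noteq> {}"
    and "\<exists>\<theta>1. 0 \<le> \<theta>1 \<and> \<theta>1 < 1 \<and> is_ICS X k \<theta>1 F1"
    and "0 < \<theta>" "\<theta> < 1" "is_ICS X k \<theta> F2"
    and "normalized X F1 A1" "normalized X F2 A2"
    and "\<exists>L. L-lipschitz_on X A2"
    and "prob_on X \<mu>1" "dual_transfer X F1 A1 \<mu>1 = \<mu>1"
    and "\<forall>\<nu>. prob_on X \<nu> \<and> dual_transfer X F1 A1 \<nu> = \<nu> \<longrightarrow> \<nu> = \<mu>1"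
    and "prob_on X \<mu>2" "dual_transfer X F2 A2 \<mu>2 = \<mu>2"
    and "\<forall>\<nu>. prob_on X \<nu> \<and> dual_transfer X F2 A2 \<nu> = \<nu> \<longrightarrow> \<nu> = \<mu>2"
    and "C > 0" "0 < lam" "lam < 1"
    and "\<forall>n \<mu> \<nu>. prob_on X \<mu> \<and> prob_on X \<nu> \<longrightarrow>
           W1 X ((dual_transfer X F2 A2 ^^ n) \<mu>) ((dual_transfer X F2 A2 ^^ n) \<nu>)
             \<le> C * lam ^ n * W1 X \<mu> \<nu>"
  shows "\<forall>N. (\<forall>x\<in>X. \<bar>A1 x - A2 x\<bar> \<le> N) \<longrightarrow>
           W1 X \<mu>1 \<mu>2 \<le> C / (1 - lam) * (diameter X * N
              + (Lip X A2 * diameter X + 1) * d_infty X F1 F2)"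
proof (intro allI impI)
  fix N assume hN: "\<forall>x\<in>X. \<bar>A1 x - A2 x\<bar> \<le> N"
  have cX: "compact X" and ne: "X \<noteq> {}" and ics2: "is_ICS X k \<theta> F2"
    and nA1: "normalized X F1 A1" and nA2: "normalized X F2 A2" and lipA2: "\<exists>L. L-lipschitz_on X A2"
    and mu1: "prob_on X \<mu>1" and fx1: "dual_transfer X F1 A1 \<mu>1 = \<mu>1"
    and mu2: "prob_on X \<mu>2" and fx2: "dual_transfer X F2 A2 \<mu>2 = \<mu>2"
    and C0: "C > 0" and l0: "0 < lam" and l1: "lam < 1"
    using assms(1,2,6,7,8,9,10,11,13,14,16,17,18) by blast+
  have contr: "\<And>n \<mu> \<nu>. prob_on X \<mu> \<Longrightarrow> prob_on X \<nu> \<Longrightarrow>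
           W1 X ((dual_transfer X F2 A2 ^^ n) \<mu>) ((dual_transfer X F2 A2 ^^ n) \<nu>)
             \<le> C * lam ^ n * W1 X \<mu> \<nu>"
    using assms(19) by blast
  have th: "0 \<le> \<theta>" using assms(4) by simp
  obtain \<theta>1 where ics1: "is_ICS X k \<theta>1 F1" using assms(3) by blast
  have cA2: "continuous_on X A2" using lipA2 lipschitz_on_continuous_on by blast
  have kpos: "0 < k"
  proof (rule ccontr)
    assume "\<not> 0 < k"
    then have k0: "k = 0" by simp
    obtain x0 where x0: "x0 \<in> X" using ne by blast
    have F0: "F2 x0 = {#}" using ICS_facts(1)[OF ics2 x0] k0 by simp
    have "(\<Sum>y\<in>#F2 x0. exp (A2 y)) = 1" using nA2 x0 unfolding normalized_def by blast
    then show False using F0 by simp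
  qed
  define T where "T = dual_transfer X F2 A2"
  have pT: "prob_on X (T \<nu>)" if "prob_on X \<nu>" for \<nu>
    unfolding T_def by (rule dt_facts(2)[OF ics2 th cX ne cA2 nA2 that])
  have pit: "prob_on X ((T ^^ n) \<mu>1)" for n
    by (induction n) (auto intro: mu1 pT)
  have fit: "(T ^^ n) \<mu>2 = \<mu>2" for n
    by (induction n) (auto simp: T_def fx2)
  define Bt where "Bt = diameter X * N + (Lip X A2 * diameter X + 1) * d_infty X F1 F2"
  have K1: "W1 X \<mu>1 (T \<mu>1) \<le> Bt"
    unfolding T_def Bt_def by (rule key_W1[OF ics1 ics2 th cX ne kpos nA1 nA2 lipA2 mu1 fx1 hN])
  have Bt0: "0 \<le> Bt" using W1_facts(3)[OF cX ne mu1 pT[OF mu1]] K1 by simp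
  have claim: "W1 X \<mu>1 ((T ^^ n) \<mu>1) \<le> C * (\<Sum>j<n. lam ^ j) * Bt" for n
  proof (induction n)
    case 0
    then show ?case using W1_self[OF cX ne mu1] by simp
  next
    case (Suc n)
    have eqs: "(T ^^ Suc n) \<mu>1 = (T ^^ n) (T \<mu>1)" by (simp only: funpow_Suc_right comp_def)
    have t: "W1 X \<mu>1 ((T ^^ n) (T \<mu>1)) \<le> W1 X \<mu>1 ((T ^^ n) \<mu>1) + W1 X ((T ^^ n) \<mu>1) ((T ^^ n) (T \<mu>1))"
      using W1_triangle[OF cX ne mu1 pit[of n] pit[of "Suc n"]] unfolding eqs .
    have c: "W1 X ((T ^^ n) \<mu>1) ((T ^^ n) (T \<mu>1)) \<le> C * lam ^ n * W1 X \<mu>1 (T \<mu>1)"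
      unfolding T_def by (rule contr[OF mu1 pT[OF mu1, unfolded T_def]])
    have d: "C * lam ^ n * W1 X \<mu>1 (T \<mu>1) \<le> C * lam ^ n * Bt" using K1 C0 l0 by (intro mult_left_mono) auto
    have S: "C * (\<Sum>j<Suc n. lam ^ j) * Bt = C * (\<Sum>j<n. lam ^ j) * Bt + C * lam ^ n * Bt"
      by (simp add: algebra_simps)
    show ?case unfolding eqs S using t c d Suc.IH by linarith
  qed
  have geo: "(\<Sum>j<n. lam ^ j) \<le> 1 / (1 - lam)" for n
  proof -
    have "(\<Sum>j<n. lam ^ j) = (1 - lam ^ n) / (1 - lam)" using l1 by (simp add: sum_gp_strict)
    also have "\<dots> \<le> 1 / (1 - lam)" using l0 l1 by (intro divide_right_mono) auto
    finally show ?thesis .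
  qed
  define W where "W = W1 X \<mu>1 \<mu>2"
  have bn: "W \<le> C / (1 - lam) * Bt + C * lam ^ n * W" for n
  proof -
    have t: "W \<le> W1 X \<mu>1 ((T ^^ n) \<mu>1) + W1 X ((T ^^ n) \<mu>1) \<mu>2"
      unfolding W_def by (rule W1_triangle[OF cX ne mu1 pit mu2])
    have c: "W1 X ((T ^^ n) \<mu>1) \<mu>2 \<le> C * lam ^ n * W"
      using contr[OF mu1 mu2, of n] fit[of n] unfolding T_def W_def by simp
    have "C * (\<Sum>j<n. lam ^ j) * Bt \<le> C * (1 / (1 - lam)) * Bt"
      using geo[of n] C0 Bt0 by (intro mult_right_mono mult_left_mono) auto
    then have d: "W1 X \<mu>1 ((T ^^ n) \<mu>1) \<le> C / (1 - lam) * Bt" using claim[of n] by simp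
    show ?thesis using t c d by linarith
  qed
  have lim: "(\<lambda>n. C / (1 - lam) * Bt + C * lam ^ n * W) \<longlonglongrightarrow> C / (1 - lam) * Bt + C * 0 * W"
    using l0 l1 by (intro tendsto_intros LIMSEQ_power_zero) auto
  have "W \<le> C / (1 - lam) * Bt + C * 0 * W"
    by (rule LIMSEQ_le_const[OF lim]) (use bn in auto)
  then show "W1 X \<mu>1 \<mu>2 \<le> C / (1 - lam) * (diameter X * N + (Lip X A2 * diameter X + 1) * d_infty X F1 F2)"
    unfolding W_def Bt_def by simp
qed

end
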